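(* Fix $n\ge1$ and let $\mathcal A_n=\{(a_1,\dots,a_n):a_k\in\mathbb Z_{\ge0},\ \sum_{i=1}^n i a_i=n\}$. For $\theta>0$ let $\mathbf A_n$ be an $\mathcal A_n$-valued random variable with the Ewens sampling formula distribution $$P\{\mathbf A_n=(a_1,\dots,a_n)\}=\frac{n!}{\theta_{(n)}}\prod_{j=1}^n\Big(\frac\theta j\Big)^{a_j}\frac1{a_j!},\qquad \theta_{(n)}=\theta(\theta+1)\cdots(\theta+n-1).$$ Then, as $\theta\to\infty$, the family of laws of $\mathbf A_n$ satisfies an LDP on $\mathcal A_n$ with speed $\log\theta$ and rate function $$I_{\mathrm{esf}}(\mathbf a)=n-\sum_{i=1}^n a_i.$$
   Context: $\mathbf A_n$ records, for a random sample of size $n$ from a population distributed as $PD(\theta)$, the numbers $A_k$ of alleles appearing exactly $k$ times. An LDP with speed $\log\theta$ uses normalization $(\log\theta)^{-1}\log$ as $\theta\to\infty$. *)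

theory Defs
  imports "HOL-Analysis.Analysis"
begin

definition elog :: "real \<Rightarrow> ereal" where
  "elog p = (if p \<le> 0 then -\<infinity> else ereal (ln p))"

definition rate_function :: "'a topology \<Rightarrow> ('a \<Rightarrow> ereal) \<Rightarrow> bool" where
  "rate_function X I \<longleftrightarrow>
     (\<forall>x\<in>topspace X. I x \<ge> 0) \<and>
     (\<forall>c::real. closedin X {x\<in>topspace X. I x \<le> ereal c})"

text \<open>Large deviation principle, as the parameter tends to infinity, for a family
  of laws P t (set functions on the measurable = all subsets of the space),
  with speed v and rate function I.\<close>
definition LDP :: "'a topology \<Rightarrow> (real \<Rightarrow> 'a set \<Rightarrow> real) \<Rightarrow> (real \<Rightarrow> real)
                    \<Rightarrow> ('a \<Rightarrow> ereal) \<Rightarrow> bool" where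
  "LDP X P v I \<longleftrightarrow>
     filterlim v at_top at_top \<and>
     rate_function X I \<and>
     (\<forall>F. closedin X F \<longrightarrow>
        Limsup at_top (\<lambda>t. elog (P t F) / ereal (v t)) \<le> - (INF x\<in>F. I x)) \<and>
     (\<forall>G. openin X G \<longrightarrow>
        Liminf at_top (\<lambda>t. elog (P t G) / ereal (v t)) \<ge> - (INF x\<in>G. I x))"

text \<open>The state space A_n: a list a of length n encodes (a_1,...,a_n) with a_j = a!(j-1).\<close>
definition esf_space :: "nat \<Rightarrow> nat list set" where
  "esf_space n = {a. length a = n \<and> (\<Sum>i=1..n. i * a ! (i - 1)) = n}"

definition esf_prob :: "real \<Rightarrow> nat \<Rightarrow> nat list \<Rightarrow> real" where
  "esf_prob \<theta> n a = fact n / pochhammer \<theta> n *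
     (\<Prod>j=1..n. (\<theta> / real j) ^ (a ! (j - 1)) / fact (a ! (j - 1)))"

definition esf_law :: "nat \<Rightarrow> real \<Rightarrow> nat list set \<Rightarrow> real" where
  "esf_law n \<theta> S = (\<Sum>a\<in>S \<inter> esf_space n. esf_prob \<theta> n a)"

definition I_esf :: "nat \<Rightarrow> nat list \<Rightarrow> ereal" where
  "I_esf n a = ereal (real n - (\<Sum>i=1..n. real (a ! (i - 1))))"

end

theory Submission
  imports Defs "HOL-Real_Asymp.Real_Asymp"
begin

definition kk :: "nat \<Rightarrow> nat list \<Rightarrow> nat" where
  "kk n a = (\<Sum>i=1..n. a ! (i - 1))"

definition cc :: "nat \<Rightarrow> nat list \<Rightarrow> real" where
  "cc n a = (\<Prod>j=1..n. (1 / real j) ^ (a ! (j - 1)) / fact (a ! (j - 1)))"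

lemma cc_pos: "cc n a > 0"
  unfolding cc_def by (intro prod_pos) auto

lemma esf_prob_eq: "esf_prob t n a = fact n / pochhammer t n * (t ^ kk n a * cc n a)"
proof -
  have "(\<Prod>j=1..n. (t / real j) ^ (a ! (j - 1)) / fact (a ! (j - 1)))
      = (\<Prod>j=1..n. t ^ (a ! (j - 1)) * ((1 / real j) ^ (a ! (j - 1)) / fact (a ! (j - 1))))"
    by (intro prod.cong refl) (simp add: power_divide)
  also have "\<dots> = t ^ kk n a * cc n a"
    unfolding prod.distrib kk_def cc_def power_sum by simp
  finally show ?thesis by (simp add: esf_prob_def)
qed

lemma kk_le: assumes "a \<in> esf_space n" shows "kk n a \<le> n"
proof -
  have "kk n a \<le> (\<Sum>i=1..n. i * a ! (i - 1))"
    unfolding kk_def by (intro sum_mono) auto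
  thus ?thesis using assms by (simp add: esf_space_def)
qed

lemma finite_esf: "finite (esf_space n)"
proof -
  have "esf_space n \<subseteq> {xs. set xs \<subseteq> {..n} \<and> length xs = n}"
  proof safe
    fix a x assume a: "a \<in> esf_space n" and x: "x \<in> set a"
    then obtain j where j: "j < length a" "a ! j = x" by (auto simp: in_set_conv_nth)
    have ln: "length a = n" using a by (simp add: esf_space_def)
    have "Suc j * a ! (Suc j - 1) \<le> (\<Sum>i=1..n. i * a ! (i - 1))"
      by (rule member_le_sum) (use j ln in auto)
    hence "Suc j * x \<le> n" using a j by (simp add: esf_space_def)
    hence "x \<le> n" by (metis le_trans mult_Suc le_add1)
    thus "x \<le> n" .
  next
    fix a assume "a \<in> esf_space n" thus "length a = n" by (simp add: esf_space_def)
  qed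
  thus ?thesis by (rule finite_subset) (rule finite_lists_length_eq, simp)
qed

lemma I_esf_eq: "I_esf n a = ereal (real n - real (kk n a))"
  by (simp add: I_esf_def kk_def)

lemma main_lim:
  assumes S: "finite S" "S \<noteq> {}"
  shows "((\<lambda>t. ln (\<Sum>a\<in>S. esf_prob t n a) / ln t) \<longlongrightarrow> real (Max (kk n ` S)) - real n) at_top"
proof -
  define m where "m = Max (kk n ` S)"
  define Q where "Q = (\<lambda>t::real. \<Prod>i<n. t / (t + real i))"
  define V where "V = (\<lambda>t::real. \<Sum>a\<in>S. cc n a * t powr (real (kk n a) - real m))"
  define L where "L = (\<Sum>a\<in>S. cc n a * (if kk n a = m then 1 else 0))"
  define R where "R = (\<lambda>t. ln (fact n * Q t * V t))"
  have Qlim: "(Q \<longlongrightarrow> 1) at_top"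
  proof -
    have "((\<lambda>t. \<Prod>i<n. t / (t + real i)) \<longlongrightarrow> (\<Prod>i<n. 1::real)) at_top"
      by (intro tendsto_prod) real_asymp
    thus ?thesis by (simp add: Q_def)
  qed
  have Vlim: "(V \<longlongrightarrow> L) at_top"
    unfolding V_def L_def
  proof (intro tendsto_sum tendsto_mult tendsto_const)
    fix a assume a: "a \<in> S"
    have "kk n a \<le> m" using S a unfolding m_def by auto
    show "((\<lambda>t. t powr (real (kk n a) - real m)) \<longlongrightarrow> (if kk n a = m then 1 else 0)) at_top"
    proof (cases "kk n a = m")
      case True
      have "\<forall>\<^sub>F t in at_top. (t::real) powr (real (kk n a) - real m) = 1"
        using eventually_gt_at_top[of 0] by eventually_elim (simp add: True)
      thus ?thesis using True by (simp add: tendsto_eventually)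
    next
      case False
      with \<open>kk n a \<le> m\<close> have "real (kk n a) - real m < 0" by simp
      from tendsto_neg_powr[OF this filterlim_ident] show ?thesis using False by simp
    qed
  qed
  have Lpos: "L > 0"
  proof -
    obtain a0 where a0: "a0 \<in> S" "kk n a0 = m" using S unfolding m_def
      by (metis (mono_tags, lifting) Max_in finite_imageI image_iff image_is_empty)
    show ?thesis unfolding L_def
      by (rule sum_pos2[OF S(1) a0(1)]) (use a0 cc_pos[of n] in \<open>auto intro: less_imp_le\<close>)
  qed
  have Rlim: "(R \<longlongrightarrow> ln (fact n * 1 * L)) at_top"
    unfolding R_def using Lpos
    by (intro tendsto_ln tendsto_mult tendsto_const Qlim Vlim) auto
  have R0: "((\<lambda>t. R t / ln t) \<longlongrightarrow> 0) at_top"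
    by (rule tendsto_divide_0[OF Rlim]) (rule filterlim_at_top_imp_at_infinity[OF ln_at_top])
  have ev: "\<forall>\<^sub>F t in at_top. real m - real n + R t / ln t = ln (\<Sum>a\<in>S. esf_prob t n a) / ln t"
    using eventually_gt_at_top[of 1]
  proof eventually_elim
    case (elim t)
    have tp: "t > 0" using elim by simp
    have poch: "pochhammer t n = (\<Prod>i<n. t + real i)"
      by (simp add: pochhammer_prod atLeast0LessThan)
    have Qt: "Q t = t ^ n / pochhammer t n"
      unfolding Q_def poch by (simp add: prod_dividef)
    have pp: "pochhammer t n > 0" using tp by (rule pochhammer_pos)
    have trm: "esf_prob t n a = t powr (real m - real n) * (fact n * Q t * (cc n a * t powr (real (kk n a) - real m)))" for a
    proof -
      have "t ^ kk n a = t powr (real m - real n) * t ^ n * t powr (real (kk n a) - real m)"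
        using tp by (simp add: powr_realpow[symmetric] powr_add[symmetric])
      thus ?thesis unfolding esf_prob_eq Qt using pp by (simp add: field_simps)
    qed
    have sumeq: "(\<Sum>a\<in>S. esf_prob t n a) = t powr (real m - real n) * (fact n * Q t * V t)"
      unfolding trm V_def by (simp add: sum_distrib_left)
    have Qp: "Q t > 0" unfolding Qt using tp pp by simp
    have Vp: "V t > 0" unfolding V_def using S tp
      by (intro sum_pos) (auto intro!: mult_pos_pos cc_pos)
    have lnt: "ln t > 0" using elim by simp
    have "ln (\<Sum>a\<in>S. esf_prob t n a) = (real m - real n) * ln t + R t"
      unfolding sumeq R_def using tp Qp Vp by (simp add: ln_mult ln_powr)
    thus ?case using lnt by (simp add: field_simps)
  qed
  have "((\<lambda>t. real m - real n + R t / ln t) \<longlongrightarrow> real m - real n + 0) at_top"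
    by (intro tendsto_add tendsto_const R0)
  hence "((\<lambda>t. real m - real n + R t / ln t) \<longlongrightarrow> real m - real n) at_top" by simp
  from tendsto_cong[OF ev] this show ?thesis unfolding m_def by simp
qed


lemma law_lim:
  assumes S: "S \<subseteq> esf_space n"
  shows "((\<lambda>t. elog (esf_law n t S) / ereal (ln t)) \<longlongrightarrow> - (INF x\<in>S. I_esf n x)) at_top"
proof (cases "S = {}")
  case True
  have "\<forall>\<^sub>F t in at_top. elog (esf_law n t S) / ereal (ln t) = - \<infinity>"
    using eventually_gt_at_top[of 1]
    by eventually_elim (simp add: True esf_law_def elog_def)
  from tendsto_eventually[OF this] show ?thesis using True by (simp add: top_ereal_def)
next
  case False
  have fin: "finite S" using S finite_esf finite_subset by blast
  define m where "m = Max (kk n ` S)"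
  have lim: "((\<lambda>t. ln (\<Sum>a\<in>S. esf_prob t n a) / ln t) \<longlongrightarrow> real m - real n) at_top"
    unfolding m_def by (rule main_lim[OF fin False])
  have INF: "(INF x\<in>S. I_esf n x) = ereal (real n - real m)"
  proof (rule antisym)
    obtain a0 where a0: "a0 \<in> S" "kk n a0 = m" using False fin unfolding m_def
      by (metis (mono_tags, lifting) Max_in finite_imageI image_iff image_is_empty)
    show "(INF x\<in>S. I_esf n x) \<le> ereal (real n - real m)"
      using INF_lower[OF a0(1), of "I_esf n"] a0 by (simp add: I_esf_eq)
    show "ereal (real n - real m) \<le> (INF x\<in>S. I_esf n x)"
    proof (rule INF_greatest)
      fix x assume "x \<in> S"
      hence "kk n x \<le> m" using fin unfolding m_def by auto
      thus "ereal (real n - real m) \<le> I_esf n x" by (simp add: I_esf_eq)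
    qed
  qed
  have ev: "\<forall>\<^sub>F t in at_top. ereal (ln (\<Sum>a\<in>S. esf_prob t n a) / ln t) = elog (esf_law n t S) / ereal (ln t)"
    using eventually_gt_at_top[of 1]
  proof eventually_elim
    case (elim t)
    have "esf_law n t S = (\<Sum>a\<in>S. esf_prob t n a)"
      unfolding esf_law_def using S by (simp add: Int_absorb2)
    moreover have "(\<Sum>a\<in>S. esf_prob t n a) > 0"
      using elim fin False
      by (intro sum_pos) (auto simp: esf_prob_eq intro!: mult_pos_pos divide_pos_pos pochhammer_pos cc_pos)
    ultimately show ?case using elim by (simp add: elog_def)
  qed
  have "((\<lambda>t. ereal (ln (\<Sum>a\<in>S. esf_prob t n a) / ln t)) \<longlongrightarrow> ereal (real m - real n)) at_top"
    using lim by (rule tendsto_ereal)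
  from tendsto_cong[OF ev] this show ?thesis unfolding INF by simp
qed

theorem theorem3p3:
  fixes n :: nat
  assumes "n \<ge> 1"
  shows "LDP (discrete_topology (esf_space n)) (esf_law n) (\<lambda>\<theta>. ln \<theta>) (I_esf n)"
  unfolding LDP_def
proof (intro conjI allI impI)
  show "filterlim (ln::real\<Rightarrow>real) at_top at_top" by (rule ln_at_top)
  show "rate_function (discrete_topology (esf_space n)) (I_esf n)"
    unfolding rate_function_def by (auto simp: I_esf_eq dest!: kk_le)
next
  fix F assume "closedin (discrete_topology (esf_space n)) F"
  hence "F \<subseteq> esf_space n" by simp
  from lim_imp_Limsup[OF trivial_limit_at_top_linorder law_lim[OF this]]
  show "Limsup at_top (\<lambda>t. elog (esf_law n t F) / ereal (ln t)) \<le> - (INF x\<in>F. I_esf n x)" by simp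
next
  fix G assume "openin (discrete_topology (esf_space n)) G"
  hence "G \<subseteq> esf_space n" by simp
  from lim_imp_Liminf[OF trivial_limit_at_top_linorder law_lim[OF this]]
  show "Liminf at_top (\<lambda>t. elog (esf_law n t G) / ereal (ln t)) \<ge> - (INF x\<in>G. I_esf n x)" by simp
qed

end
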